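(* Let $f\in\mathbb V(\mathcal E_\oplus)$ and set $g:=-2\imath\,\Pi B(A-\imath B^\top TB)^{-1}f$. If $p\in\mathbb V(\Gamma_\oplus)$ solves $(I+\Pi S)p=g$, then $u:=(A-\imath B^\top TB)^{-1}(B^\top Tp+f)$ belongs to $\operatorname{range}(R)$, and $u_\Omega:=(R^\top R)^{-1}R^\top u$ (so that $Ru_\Omega=u$) satisfies $R^\top AR\,u_\Omega=R^\top f$; i.e. $u_\Omega$ is the unique solution of the global system $A_\Omega u_\Omega=f_\Omega$ with $A_\Omega:=R^\top AR$, $f_\Omega:=R^\top f$.
   Context: Let $\mathcal E$ be a finite set, $\mathcal E_1,\dots,\mathcal E_J$ subsets with $\mathcal E=\bigcup_j\mathcal E_j$, $\Sigma:=\bigcup_{1\le j<k\le J}(\mathcal E_j\cap\mathcal E_k)$, $\Gamma$ any set with $\Sigma\subset\Gamma\subset\mathcal E$, $\Gamma_j:=\Gamma\cap\mathcal E_j$. $\mathbb V(\mathcal F):=\mathbb C^{\mathcal F}$; $\mathbb V(\mathcal E_\oplus):=\prod_j\mathbb V(\mathcal E_j)$, $\mathbb V(\Gamma_\oplus):=\prod_j\mathbb V(\Gamma_j)$. Restrictions: $Rx=((x_e)_{e\in\mathcal E_1},\dots,(x_e)_{e\in\mathcal E_J})$ for $x\in\mathbb V(\mathcal E)$ ($R^\top R$ is the diagonal matrix with entries $\#\{j:e\in\mathcal E_j\}\ge1$); $Qx=((x_e)_{e\in\Gamma_1},\dots,(x_e)_{e\in\Gamma_J})$ for $x\in\mathbb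 V(\Gamma)$; $B_jx=(x_e)_{e\in\Gamma_j}$ for $x\in\mathbb V(\mathcal E_j)$, $B:=\mathrm{diag}(B_j)$; $\top$ is the non-conjugated transpose. For each $j$ let $T_j$ be a real symmetric positive definite matrix on $\mathbb V(\Gamma_j)$, $T:=\mathrm{diag}(T_1,\dots,T_J)$, $P:=Q(Q^\top TQ)^{-1}Q^\top T$, $\Pi:=2P-I$. Let $A=\mathrm{diag}(A_1,\dots,A_J)$, $A_j\in\mathbb C^{\mathcal E_j\times\mathcal E_j}$, satisfying (A1) $\operatorname{Im}(\bar v^\top Av)\le0$ for all $v\in\mathbb V(\mathcal E_\oplus)$ and (A2) $R^\top AR$ invertible; then $A-\imath B^\top TB$ is invertible. Scattering matrix: $S:=I+2\imath B(A-\imath B^\top TB)^{-1}B^\top T$. *)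

theory Defs
  imports Complex_Main
begin

text \<open>Vectors in V(F) (F a subset of the finite ground set) are functions
  'e => complex vanishing outside F.  Vectors in the product spaces
  V(E_plus) = prod_j V(E_j) are functions nat => 'e => complex, component j
  (for j < J) supported on E_j, and zero for j >= J.  Block-diagonal matrices
  are given blockwise by their entries nat => 'e => 'e => _ .\<close>

definition vec_on :: "'e set \<Rightarrow> ('e \<Rightarrow> complex) \<Rightarrow> bool" where
  "vec_on F x \<longleftrightarrow> (\<forall>e. e \<notin> F \<longrightarrow> x e = 0)"

definition bvec :: "nat \<Rightarrow> (nat \<Rightarrow> 'e set) \<Rightarrow> (nat \<Rightarrow> 'e \<Rightarrow> complex) \<Rightarrow> bool" where
  "bvec J F v \<longleftrightarrow> (\<forall>j e. (J \<le> j \<or> e \<notin> F j) \<longrightarrow> v j e = 0)"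

text \<open>Restriction x |-> ((x_e)_{e in F_1}, ..., (x_e)_{e in F_J})  (the maps R and Q).\<close>
definition restr :: "nat \<Rightarrow> (nat \<Rightarrow> 'e set) \<Rightarrow> ('e \<Rightarrow> complex) \<Rightarrow> nat \<Rightarrow> 'e \<Rightarrow> complex" where
  "restr J F x = (\<lambda>j e. if j < J \<and> e \<in> F j then x e else 0)"

text \<open>Its (non-conjugated) transpose: (restrT v)_e = sum over j with e in F_j of v_j(e).\<close>
definition restrT :: "nat \<Rightarrow> (nat \<Rightarrow> 'e set) \<Rightarrow> (nat \<Rightarrow> 'e \<Rightarrow> complex) \<Rightarrow> 'e \<Rightarrow> complex" where
  "restrT J F v = (\<lambda>e. \<Sum>j\<in>{j. j < J \<and> e \<in> F j}. v j e)"

text \<open>Blockwise restriction to G_j subset of E_j (the map B) and its transpose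
  (extension by zero, B^T); as functions on our representation both are masking.\<close>
definition bmask :: "nat \<Rightarrow> (nat \<Rightarrow> 'e set) \<Rightarrow> (nat \<Rightarrow> 'e \<Rightarrow> complex) \<Rightarrow> nat \<Rightarrow> 'e \<Rightarrow> complex" where
  "bmask J G v = (\<lambda>j e. if j < J \<and> e \<in> G j then v j e else 0)"

definition bapply :: "nat \<Rightarrow> (nat \<Rightarrow> 'e set) \<Rightarrow> (nat \<Rightarrow> 'e \<Rightarrow> 'e \<Rightarrow> complex)
    \<Rightarrow> (nat \<Rightarrow> 'e \<Rightarrow> complex) \<Rightarrow> nat \<Rightarrow> 'e \<Rightarrow> complex" where
  "bapply J F M v = (\<lambda>j e. if j < J \<and> e \<in> F j then (\<Sum>e'\<in>F j. M j e e' * v j e') else 0)"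

text \<open>Inverse of an operator L on a carrier C (meaningful when L is bijective on C).\<close>
definition op_inv :: "'a set \<Rightarrow> ('a \<Rightarrow> 'a) \<Rightarrow> 'a \<Rightarrow> 'a" where
  "op_inv C L y = (THE x. x \<in> C \<and> L x = y)"

definition op_invertible_on :: "'a set \<Rightarrow> ('a \<Rightarrow> 'a) \<Rightarrow> bool" where
  "op_invertible_on C L \<longleftrightarrow> (\<forall>y\<in>C. \<exists>!x. x \<in> C \<and> L x = y)"


text \<open>The objects of the paper, for data J, E_j (Ej), Gamma (G), blocks A_j (Am), T_j (Tm).\<close>

definition Gj :: "(nat \<Rightarrow> 'e set) \<Rightarrow> 'e set \<Rightarrow> nat \<Rightarrow> 'e set" where
  "Gj Ej G = (\<lambda>j. G \<inter> Ej j)"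

definition Aop :: "nat \<Rightarrow> (nat \<Rightarrow> 'e set) \<Rightarrow> (nat \<Rightarrow> 'e \<Rightarrow> 'e \<Rightarrow> complex)
    \<Rightarrow> (nat \<Rightarrow> 'e \<Rightarrow> complex) \<Rightarrow> nat \<Rightarrow> 'e \<Rightarrow> complex" where
  "Aop J Ej Am = bapply J Ej Am"

definition Top :: "nat \<Rightarrow> (nat \<Rightarrow> 'e set) \<Rightarrow> 'e set \<Rightarrow> (nat \<Rightarrow> 'e \<Rightarrow> 'e \<Rightarrow> real)
    \<Rightarrow> (nat \<Rightarrow> 'e \<Rightarrow> complex) \<Rightarrow> nat \<Rightarrow> 'e \<Rightarrow> complex" where
  "Top J Ej G Tm = bapply J (Gj Ej G) (\<lambda>j e e'. complex_of_real (Tm j e e'))"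

definition Bop where "Bop J Ej G = bmask J (Gj Ej G)"
definition BopT where "BopT J Ej G = bmask J (Gj Ej G)"

definition Mop where
  "Mop J Ej G Am Tm = (\<lambda>v j e. Aop J Ej Am v j e
       - \<i> * BopT J Ej G (Top J Ej G Tm (Bop J Ej G v)) j e)"
definition Minv where
  "Minv J Ej G Am Tm = op_inv {v. bvec J Ej v} (Mop J Ej G Am Tm)"

definition Sop where
  "Sop J Ej G Am Tm = (\<lambda>q j e. q j e + 2 * \<i> *
       Bop J Ej G (Minv J Ej G Am Tm (BopT J Ej G (Top J Ej G Tm q))) j e)"

definition Pop where
  "Pop J Ej G Tm = (\<lambda>q. restr J (Gj Ej G)
       (op_inv {x. vec_on G x} (\<lambda>x. restrT J (Gj Ej G) (Top J Ej G Tm (restr J (Gj Ej G) x)))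
          (restrT J (Gj Ej G) (Top J Ej G Tm q))))"
definition PiOp where
  "PiOp J Ej G Tm = (\<lambda>q j e. 2 * Pop J Ej G Tm q j e - q j e)"

end

theory Submission
  imports Defs "HOL-Library.Function_Algebras"
begin


context vector_space begin
lemma inj_surj_gen:
  assumes D: "finite D" and C: "subspace C" and CD: "C \<subseteq> span D"
  and add: "\<And>x y. L (x + y) = L x + L y" and sc: "\<And>c x. L (c *s x) = c *s (L x)"
  and LC: "L ` C \<subseteq> C" and ker: "\<forall>x\<in>C. L x = 0 \<longrightarrow> x = 0"
  shows "\<forall>y\<in>C. \<exists>!x. x \<in> C \<and> L x = y"
proof -
  have lin: "Vector_Spaces.linear scale scale L" using add sc vector_space_axioms
    by (simp add: Vector_Spaces.linear_iff)
  interpret L: Vector_Spaces.linear scale scale L by (rule lin)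
  have inj: "inj_on L C" using L.inj_on_iff_eq_0[OF C] ker by blast
  obtain B where B: "B \<subseteq> C" "independent B" "C \<subseteq> span B" "card B = dim C"
    using basis_exists by blast
  have finB: "finite B" using independent_span_bound[OF D B(2)] B(1) CD by auto
  have spB: "span B = C" using span_subspace[OF B(1) B(3) C] .
  have injB: "inj_on L (span B)" using inj spB by simp
  have indLB: "independent (L ` B)" using L.independent_injective_image[OF B(2) injB] .
  have cardLB: "card (L ` B) = card B" using card_image inj_on_subset[OF inj B(1)] by blast
  have spLB: "span (L ` B) = L ` C" using L.span_image spB by simp
  have sur: "y \<in> L ` C" if yC: "y \<in> C" for y
  proof (rule ccontr)
    assume "y \<notin> L ` C"
    hence ny: "y \<notin> span (L ` B)" using spLB by simp
    have ind2: "independent (insert y (L ` B))" using independent_insertI[OF ny indLB] .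
    have "insert y (L ` B) \<subseteq> span B" using yC LC B(1) spB by auto
    hence "card (insert y (L ` B)) \<le> card B" using independent_span_bound[OF finB ind2] by auto
    moreover have "y \<notin> L ` B" using ny span_base by blast
    ultimately show False using cardLB finB by simp
  qed
  show ?thesis
  proof
    fix y assume "y \<in> C"
    then obtain x where "x \<in> C" "L x = y" using sur by blast
    then show "\<exists>!x. x \<in> C \<and> L x = y" using inj unfolding inj_on_def by blast
  qed
qed
end

lemma op_inv_props:
  assumes "\<forall>y\<in>C. \<exists>!x. x \<in> C \<and> L x = y" and "y \<in> C"
  shows "op_inv C L y \<in> C \<and> L (op_inv C L y) = y"
proof -
  have "\<exists>!x. x \<in> C \<and> L x = y" using assms by blast
  then have "(THE x. x \<in> C \<and> L x = y) \<in> C \<and> L (THE x. x \<in> C \<and> L x = y) = y" by (rule theI')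
  then show ?thesis unfolding op_inv_def .
qed

lemma op_inv_eq:
  assumes "\<forall>y\<in>C. \<exists>!x. x \<in> C \<and> L x = y" and "y \<in> C" and "x \<in> C" "L x = y"
  shows "op_inv C L y = x"
  unfolding op_inv_def
proof (rule the_equality)
  show "x \<in> C \<and> L x = y" using assms by blast
  show "\<And>x'. x' \<in> C \<and> L x' = y \<Longrightarrow> x' = x" using assms by blast
qed

definition sc2 :: "complex \<Rightarrow> (nat \<Rightarrow> 'e \<Rightarrow> complex) \<Rightarrow> nat \<Rightarrow> 'e \<Rightarrow> complex" where
  "sc2 c v = (\<lambda>j e. c * v j e)"
definition sc1 :: "complex \<Rightarrow> ('e \<Rightarrow> complex) \<Rightarrow> 'e \<Rightarrow> complex" where
  "sc1 c x = (\<lambda>e. c * x e)"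

lemma vs2: "vector_space (sc2 :: complex \<Rightarrow> (nat \<Rightarrow> 'e \<Rightarrow> complex) \<Rightarrow> _)"
  by unfold_locales (simp_all add: sc2_def fun_eq_iff distrib_left distrib_right)
lemma vs1: "vector_space (sc1 :: complex \<Rightarrow> ('e \<Rightarrow> complex) \<Rightarrow> _)"
  by unfold_locales (simp_all add: sc1_def fun_eq_iff distrib_left distrib_right)

lemma sum_fun_apply1: "(sum f A) e = (\<Sum>a\<in>A. f a e)"
  by (induction A rule: infinite_finite_induct) auto
lemma sum_fun_apply2: "(sum f A) j e = (\<Sum>a\<in>A. f a j e)"
  by (induction A rule: infinite_finite_induct) auto

lemma span1:
  assumes "finite F"
  shows "{x. vec_on F x} \<subseteq> module.span sc1 ((\<lambda>e. \<lambda>e'. if e' = e then 1 else 0) ` F)"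
    and "module.subspace sc1 {x. vec_on F x}"
proof -
  interpret vector_space sc1 by (rule vs1)
  show "{x. vec_on F x} \<subseteq> span ((\<lambda>e. \<lambda>e'. if e' = e then 1 else 0) ` F)"
  proof
    fix x assume x: "x \<in> {x. vec_on F x}"
    have eq: "x = (\<Sum>e\<in>F. sc1 (x e) (\<lambda>e'. if e' = e then 1 else 0))"
      using x assms by (auto simp: fun_eq_iff sum_fun_apply1 sc1_def vec_on_def if_distrib sum.delta cong: if_cong)
    show "x \<in> span ((\<lambda>e. \<lambda>e'. if e' = e then 1 else 0) ` F)"
      by (subst eq, intro span_sum span_scale span_base) auto
  qed
  show "subspace {x. vec_on F x}"
    unfolding subspace_def by (auto simp: vec_on_def sc1_def)
qed

lemma span2:
  assumes "finite (Sigma {..<J} F)"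
  shows "{v. bvec J F v} \<subseteq> module.span sc2 ((\<lambda>(j,e). \<lambda>j' e'. if j' = j \<and> e' = e then 1 else 0) ` Sigma {..<J} F)"
    and "module.subspace sc2 {v. bvec J F v}"
proof -
  interpret vector_space sc2 by (rule vs2)
  show "{v. bvec J F v} \<subseteq> span ((\<lambda>(j,e). \<lambda>j' e'. if j' = j \<and> e' = e then 1 else 0) ` Sigma {..<J} F)"
  proof
    fix v assume v: "v \<in> {v. bvec J F v}"
    have eq: "v = (\<Sum>(j,e)\<in>Sigma {..<J} F. sc2 (v j e) (\<lambda>j' e'. if j' = j \<and> e' = e then 1 else 0))"
    proof (intro ext)
      fix j' e'
      have "(\<Sum>(j,e)\<in>Sigma {..<J} F. sc2 (v j e) (\<lambda>j' e'. if j' = j \<and> e' = e then 1 else 0)) j' e'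
          = (\<Sum>(j,e)\<in>Sigma {..<J} F. if (j, e) = (j', e') then v j e else 0)"
        unfolding sum_fun_apply2 by (rule sum.cong) (auto simp: sc2_def)
      also have "\<dots> = (\<Sum>x\<in>Sigma {..<J} F. if x = (j', e') then v j' e' else 0)"
        by (rule sum.cong) (auto split: if_splits)
      also have "\<dots> = v j' e'" using v assms by (simp add: sum.delta bvec_def) (meson not_le)
      finally show "v j' e' = (\<Sum>(j,e)\<in>Sigma {..<J} F. sc2 (v j e) (\<lambda>j' e'. if j' = j \<and> e' = e then 1 else 0)) j' e'" by simp
    qed
    show "v \<in> span ((\<lambda>(j,e). \<lambda>j' e'. if j' = j \<and> e' = e then 1 else 0) ` Sigma {..<J} F)"
      by (subst eq, rule span_sum, clarify, rule span_scale, rule span_base) force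
  qed
  show "subspace {v. bvec J F v}"
    unfolding subspace_def bvec_def sc2_def by simp
qed



lemma bapply_add: "bapply J F M (a + b) = bapply J F M a + bapply J F M b"
  by (auto simp: bapply_def fun_eq_iff sum.distrib algebra_simps)
lemma bapply_sc: "bapply J F M (sc2 c a) = sc2 c (bapply J F M a)"
  by (auto simp: bapply_def fun_eq_iff sc2_def sum_distrib_left algebra_simps)
lemma bmask_add: "bmask J F (a + b) = bmask J F a + bmask J F b"
  by (auto simp: bmask_def fun_eq_iff)
lemma bmask_sc: "bmask J F (sc2 c a) = sc2 c (bmask J F a)"
  by (auto simp: bmask_def fun_eq_iff sc2_def)
lemma restr_add: "restr J F (a + b) = restr J F a + restr J F b"
  by (auto simp: restr_def fun_eq_iff)
lemma restr_sc: "restr J F (sc1 c a) = sc2 c (restr J F a)"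
  by (auto simp: restr_def fun_eq_iff sc2_def sc1_def)
lemma restrT_add: "restrT J F (a + b) = restrT J F a + restrT J F b"
  by (auto simp: restrT_def fun_eq_iff sum.distrib)
lemma restrT_sc: "restrT J F (sc2 c a) = sc1 c (restrT J F a)"
  by (auto simp: restrT_def fun_eq_iff sc2_def sc1_def sum_distrib_left)

lemma bapply_bvec: "bvec J F (bapply J F M v)" by (auto simp: bvec_def bapply_def)
lemma bmask_bvec: "bvec J F (bmask J F v)" by (auto simp: bvec_def bmask_def)
lemma restr_bvec: "bvec J F (restr J F v)" by (auto simp: bvec_def restr_def)
lemma restrT_vec: "vec_on (\<Union>j<J. F j) (restrT J F v)" by (auto simp: vec_on_def restrT_def intro!: sum.neutral)

lemma Top_add: "Top J Ej G Tm (a + b) = Top J Ej G Tm a + Top J Ej G Tm b"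
  by (simp add: Top_def bapply_add)
lemma Top_sc: "Top J Ej G Tm (sc2 c a) = sc2 c (Top J Ej G Tm a)"
  by (simp add: Top_def bapply_sc)

lemma Mop_eq: "Mop J Ej G Am Tm v = Aop J Ej Am v - sc2 \<i> (BopT J Ej G (Top J Ej G Tm (Bop J Ej G v)))"
  by (simp add: Mop_def fun_eq_iff sc2_def)
lemma Mop_add: "Mop J Ej G Am Tm (a + b) = Mop J Ej G Am Tm a + Mop J Ej G Am Tm b"
  unfolding Mop_eq Aop_def Bop_def BopT_def
  by (simp add: bapply_add bmask_add Top_add fun_eq_iff sc2_def algebra_simps)
lemma Mop_sc: "Mop J Ej G Am Tm (sc2 c a) = sc2 c (Mop J Ej G Am Tm a)"
  unfolding Mop_eq Aop_def Bop_def BopT_def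
  by (simp only: bapply_sc bmask_sc Top_sc) (simp add: fun_eq_iff sc2_def algebra_simps)
lemma Mop_bvec: "bvec J Ej (Mop J Ej G Am Tm v)"
  by (auto simp: Mop_def bvec_def Aop_def bapply_def BopT_def bmask_def Gj_def)

lemma qform:
  fixes T :: "'e \<Rightarrow> 'e \<Rightarrow> real" and z :: "'e \<Rightarrow> complex"
  assumes fin: "finite F" and sym: "\<forall>e\<in>F. \<forall>e'\<in>F. T e e' = T e' e"
  shows "(\<Sum>e\<in>F. \<Sum>e'\<in>F. cnj (z e) * (complex_of_real (T e e') * z e'))
    = complex_of_real ((\<Sum>e\<in>F. \<Sum>e'\<in>F. Re (z e) * T e e' * Re (z e'))
                     + (\<Sum>e\<in>F. \<Sum>e'\<in>F. Im (z e) * T e e' * Im (z e')))" (is "?l = ?r")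
proof -
  have sw: "(\<Sum>e\<in>F. \<Sum>e'\<in>F. T e e' * (Re (z e) * Im (z e'))) = (\<Sum>e\<in>F. \<Sum>e'\<in>F. T e e' * (Im (z e) * Re (z e')))"
  proof -
    have "(\<Sum>e\<in>F. \<Sum>e'\<in>F. T e e' * (Re (z e) * Im (z e'))) = (\<Sum>e'\<in>F. \<Sum>e\<in>F. T e e' * (Re (z e) * Im (z e')))"
      by (rule sum.swap)
    also have "\<dots> = (\<Sum>e'\<in>F. \<Sum>e\<in>F. T e' e * (Im (z e') * Re (z e)))"
      using sym by (intro sum.cong refl) (auto simp: mult_ac)
    finally show ?thesis .
  qed
  show ?thesis
  proof (rule complex_eqI)
    show "Re ?l = Re ?r" by (simp add: Re_sum sum.distrib algebra_simps)
    show "Im ?l = Im ?r" using sw by (simp add: Im_sum sum.distrib sum_subtractf algebra_simps)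
  qed
qed

lemma lin_aux: fixes a b x y p :: complex
  assumes "p + (2 * a - (p + 2 * \<i> * x)) = - 2 * \<i> * (2 * b - y)"
  shows "a = \<i> * x + \<i> * y - 2 * \<i> * b"
proof -
  have "2 * a = 2 * (\<i> * x + \<i> * y - 2 * \<i> * b)"
    using assms by (simp add: algebra_simps)
  then show ?thesis by (metis mult_cancel_left zero_neq_numeral)
qed



lemma rangeR:
  assumes bv: "bvec J Ej v" and Sig: "(\<Union>j<J. \<Union>k\<in>{j<..<J}. Ej j \<inter> Ej k) \<subseteq> G"
   and cons: "\<forall>j<J. \<forall>k<J. \<forall>e\<in>G. e \<in> Ej j \<longrightarrow> e \<in> Ej k \<longrightarrow> v j e = v k e"
  shows "restr J Ej (\<lambda>e. restrT J Ej v e / of_nat (card {j. j < J \<and> e \<in> Ej j})) = v"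
proof (intro ext)
  fix j e
  show "restr J Ej (\<lambda>e. restrT J Ej v e / of_nat (card {j. j < J \<and> e \<in> Ej j})) j e = v j e"
  proof (cases "j < J \<and> e \<in> Ej j")
    case True
    let ?K = "{k. k < J \<and> e \<in> Ej k}"
    have all: "v k e = v j e" if k: "k \<in> ?K" for k
    proof (cases "k = j")
      case False
      have "e \<in> G"
      proof (cases "j < k")
        case True
        with k \<open>j < J \<and> e \<in> Ej j\<close> have "e \<in> (\<Union>j<J. \<Union>k\<in>{j<..<J}. Ej j \<inter> Ej k)"
          by (intro UN_I[of j] UN_I[of k]) auto
        then show ?thesis using Sig by blast
      next
        case False
        with \<open>k \<noteq> j\<close> have "k < j" by simp
        with k \<open>j < J \<and> e \<in> Ej j\<close> have "e \<in> (\<Union>j<J. \<Union>k\<in>{j<..<J}. Ej j \<inter> Ej k)"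
          by (intro UN_I[of k] UN_I[of j]) auto
        then show ?thesis using Sig by blast
      qed
      then show ?thesis using cons True k by auto
    qed simp
    have fin: "finite ?K" by (rule finite_subset[of _ "{..<J}"]) auto
    have jK: "j \<in> ?K" using True by simp
    have cK: "card ?K \<noteq> 0" using fin jK by auto
    have "restrT J Ej v e = (\<Sum>k\<in>?K. v j e)" unfolding restrT_def using all by (intro sum.cong) auto
    also have "\<dots> = of_nat (card ?K) * v j e" by simp
    finally show ?thesis using True cK by (simp add: restr_def)
  next
    case False
    then show ?thesis using bv by (auto simp: restr_def bvec_def)
  qed
qed

lemma uO_vec:
  assumes cover: "E = (\<Union>j<J. Ej j)"
  shows "vec_on E (\<lambda>e. restrT J Ej v e / of_nat (card {j. j < J \<and> e \<in> Ej j}))"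
  using restrT_vec[where J=J and F=Ej and v=v] cover by (auto simp: vec_on_def)



theorem mainTheorem11:
  fixes E :: "'e set" and J :: nat and Ej :: "nat \<Rightarrow> 'e set" and G :: "'e set"
    and Am :: "nat \<Rightarrow> 'e \<Rightarrow> 'e \<Rightarrow> complex" and Tm :: "nat \<Rightarrow> 'e \<Rightarrow> 'e \<Rightarrow> real"
    and f p :: "nat \<Rightarrow> 'e \<Rightarrow> complex"
  assumes finE: "finite E"
    and cover: "E = (\<Union>j<J. Ej j)"
    and Sigma_sub: "(\<Union>j<J. \<Union>k\<in>{j<..<J}. Ej j \<inter> Ej k) \<subseteq> G"
    and G_sub: "G \<subseteq> E"
    and T_sym: "\<forall>j<J. \<forall>e\<in>Gj Ej G j. \<forall>e'\<in>Gj Ej G j. Tm j e e' = Tm j e' e"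
    and T_pd: "\<forall>j<J. \<forall>x :: 'e \<Rightarrow> real. (\<forall>e. e \<notin> Gj Ej G j \<longrightarrow> x e = 0) \<and> x \<noteq> (\<lambda>_. 0)
                 \<longrightarrow> (\<Sum>e\<in>Gj Ej G j. \<Sum>e'\<in>Gj Ej G j. x e * Tm j e e' * x e') > 0"
    and A1: "\<forall>v. bvec J Ej v \<longrightarrow> Im (\<Sum>j<J. \<Sum>e\<in>Ej j. cnj (v j e) * Aop J Ej Am v j e) \<le> 0"
    and A2: "op_invertible_on {x. vec_on E x} (\<lambda>x. restrT J Ej (Aop J Ej Am (restr J Ej x)))"
    and f_in: "bvec J Ej f"
    and p_in: "bvec J (Gj Ej G) p"
    and p_sol: "(\<lambda>j e. p j e + PiOp J Ej G Tm (Sop J Ej G Am Tm p) j e)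
                = (\<lambda>j e. - 2 * \<i> * PiOp J Ej G Tm (Bop J Ej G (Minv J Ej G Am Tm f)) j e)"
  shows "let u = Minv J Ej G Am Tm (\<lambda>j e. BopT J Ej G (Top J Ej G Tm p) j e + f j e);
             u\<Omega> = (\<lambda>e. restrT J Ej u e / of_nat (card {j. j < J \<and> e \<in> Ej j}))
         in (\<exists>x. vec_on E x \<and> restr J Ej x = u)
          \<and> vec_on E u\<Omega> \<and> restr J Ej u\<Omega> = u
          \<and> restrT J Ej (Aop J Ej Am (restr J Ej u\<Omega>)) = restrT J Ej f
          \<and> (\<forall>w. vec_on E w \<and> restrT J Ej (Aop J Ej Am (restr J Ej w)) = restrT J Ej f \<longrightarrow> w = u\<Omega>)"
proof -
  define \<Gamma> where "\<Gamma> = Gj Ej G"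
  define C2 where "C2 = {v::nat\<Rightarrow>'e\<Rightarrow>complex. bvec J Ej v}"
  define CG where "CG = {x::'e\<Rightarrow>complex. vec_on G x}"
  define M where "M = Mop J Ej G Am Tm"
  define T where "T = Top J Ej G Tm"
  define K where "K = (\<lambda>x. restrT J \<Gamma> (T (restr J \<Gamma> x)))"
  define Qf where "Qf = (\<lambda>j (y::'e\<Rightarrow>real). \<Sum>e\<in>\<Gamma> j. \<Sum>e'\<in>\<Gamma> j. y e * Tm j e e' * y e')"
  have finEj: "finite (Ej j)" if "j < J" for j
    by (rule finite_subset[OF _ finE]) (use cover that in auto)
  have finG: "finite G" using finE G_sub by (rule finite_subset[rotated])
  have fin\<Gamma>: "finite (\<Gamma> j)" for j using finG unfolding \<Gamma>_def Gj_def by simp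
  have Qcut: "Qf j y = Qf j (\<lambda>e. if e \<in> \<Gamma> j then y e else 0)" for j y
    unfolding Qf_def by (intro sum.cong refl) auto
  have Qpd: "Qf j (\<lambda>e. if e \<in> \<Gamma> j then y e else 0) > 0"
    if "j < J" "(\<lambda>e. if e \<in> \<Gamma> j then y e else 0) \<noteq> (\<lambda>_. 0)" for j y
  proof -
    let ?y = "\<lambda>e. if e \<in> \<Gamma> j then y e else 0"
    have "(\<forall>e. e \<notin> Gj Ej G j \<longrightarrow> ?y e = 0) \<and> ?y \<noteq> (\<lambda>_. 0)" using that by (simp add: \<Gamma>_def)
    then have "0 < (\<Sum>e\<in>Gj Ej G j. \<Sum>e'\<in>Gj Ej G j. ?y e * Tm j e e' * ?y e')" using T_pd that(1) by simp
    then show ?thesis unfolding Qf_def \<Gamma>_def .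
  qed
  have Qpos: "Qf j y \<ge> 0" if "j < J" for j y
  proof (cases "(\<lambda>e. if e \<in> \<Gamma> j then y e else 0) = (\<lambda>_. 0)")
    case True
    then show ?thesis by (subst Qcut) (simp add: Qf_def)
  next
    case False
    then show ?thesis using Qpd[OF that False] Qcut[of j y] by simp
  qed
  have Qzero: "y e = 0" if "j < J" "Qf j y = 0" "e \<in> \<Gamma> j" for j y e
  proof (rule ccontr)
    assume "y e \<noteq> 0"
    then have "(\<lambda>e. if e \<in> \<Gamma> j then y e else 0) \<noteq> (\<lambda>_. 0)" using that(3) by (auto simp: fun_eq_iff)
    then show False using Qpd[OF that(1), of y] Qcut[of j y] that(2) by simp
  qed
  have qf: "(\<Sum>e\<in>\<Gamma> j. \<Sum>e'\<in>\<Gamma> j. cnj (z e) * (complex_of_real (Tm j e e') * z e'))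
      = complex_of_real (Qf j (\<lambda>e. Re (z e)) + Qf j (\<lambda>e. Im (z e)))" if "j < J" for j z
    unfolding Qf_def
    by (rule qform[OF fin\<Gamma>]) (use T_sym that in \<open>auto simp: \<Gamma>_def\<close>)
  have qsum0: "z j e = 0" if "(\<Sum>j<J. Qf j (\<lambda>e. Re (z j e)) + Qf j (\<lambda>e. Im (z j e))) \<le> 0"
      "j < J" "e \<in> \<Gamma> j" for z j e
  proof -
    have nn: "\<forall>k\<in>{..<J}. 0 \<le> Qf k (\<lambda>e. Re (z k e)) + Qf k (\<lambda>e. Im (z k e))"
      using Qpos by (simp add: add_nonneg_nonneg)
    have "(\<Sum>j<J. Qf j (\<lambda>e. Re (z j e)) + Qf j (\<lambda>e. Im (z j e))) = 0"
    proof -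
      have "0 \<le> (\<Sum>j<J. Qf j (\<lambda>e. Re (z j e)) + Qf j (\<lambda>e. Im (z j e)))"
        by (rule sum_nonneg) (use nn in blast)
      then show ?thesis using that(1) by linarith
    qed
    then have "Qf j (\<lambda>e. Re (z j e)) + Qf j (\<lambda>e. Im (z j e)) = 0"
    proof -
      have "\<forall>k\<in>{..<J}. Qf k (\<lambda>e. Re (z k e)) + Qf k (\<lambda>e. Im (z k e)) = 0"
        using sum_nonneg_eq_0_iff[of "{..<J}" "\<lambda>k. Qf k (\<lambda>e. Re (z k e)) + Qf k (\<lambda>e. Im (z k e))"] nn \<open>(\<Sum>j<J. Qf j (\<lambda>e. Re (z j e)) + Qf j (\<lambda>e. Im (z j e))) = 0\<close>
        by blast
      then show ?thesis using that(2) by simp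
    qed
    then have "Qf j (\<lambda>e. Re (z j e)) = 0" "Qf j (\<lambda>e. Im (z j e)) = 0"
      using Qpos[OF that(2), of "\<lambda>e. Re (z j e)"] Qpos[OF that(2), of "\<lambda>e. Im (z j e)"] by linarith+
    then have "Re (z j e) = 0" "Im (z j e) = 0"
      using Qzero[OF that(2) _ that(3)] by blast+
    then show ?thesis by (simp add: complex_eq_iff)
  qed
  have inner: "(\<Sum>e\<in>Ej j. cnj (v j e) * BopT J Ej G (T (Bop J Ej G v)) j e)
      = complex_of_real (Qf j (\<lambda>e. Re (v j e)) + Qf j (\<lambda>e. Im (v j e)))" if "j < J" for j v
  proof -
    have "(\<Sum>e\<in>Ej j. cnj (v j e) * BopT J Ej G (T (Bop J Ej G v)) j e)
        = (\<Sum>e\<in>Ej j. if e \<in> \<Gamma> j then cnj (v j e) * T (Bop J Ej G v) j e else 0)"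
      using that by (intro sum.cong refl) (simp add: BopT_def bmask_def \<Gamma>_def)
    also have "\<dots> = (\<Sum>e\<in>Ej j \<inter> \<Gamma> j. cnj (v j e) * T (Bop J Ej G v) j e)"
      by (rule sum.inter_restrict[OF finEj[OF that], symmetric])
    also have "Ej j \<inter> \<Gamma> j = \<Gamma> j" by (auto simp: \<Gamma>_def Gj_def)
    also have "(\<Sum>e\<in>\<Gamma> j. cnj (v j e) * T (Bop J Ej G v) j e)
        = (\<Sum>e\<in>\<Gamma> j. \<Sum>e'\<in>\<Gamma> j. cnj (v j e) * (complex_of_real (Tm j e e') * v j e'))"
    proof (intro sum.cong refl)
      fix e assume e: "e \<in> \<Gamma> j"
      have "T (Bop J Ej G v) j e = (\<Sum>e'\<in>\<Gamma> j. complex_of_real (Tm j e e') * v j e')"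
        using that e by (auto simp: T_def Top_def bapply_def Bop_def bmask_def \<Gamma>_def intro!: sum.cong)
      then show "cnj (v j e) * T (Bop J Ej G v) j e = (\<Sum>e'\<in>\<Gamma> j. cnj (v j e) * (complex_of_real (Tm j e e') * v j e'))"
        by (simp add: sum_distrib_left)
    qed
    also have "\<dots> = complex_of_real (Qf j (\<lambda>e. Re (v j e)) + Qf j (\<lambda>e. Im (v j e)))"
      by (rule qf[OF that])
    finally show ?thesis .
  qed
  have T0: "T (\<lambda>_ _. 0) = (\<lambda>_ _. 0)" by (simp add: T_def Top_def bapply_def fun_eq_iff)
  have restrT0: "restrT J F (\<lambda>_ _. 0) = (\<lambda>_. 0)" for F :: "nat \<Rightarrow> 'e set" by (simp add: restrT_def fun_eq_iff)
  have restr0: "restr J F (\<lambda>_. 0) = (\<lambda>_ _. 0)" for F :: "nat \<Rightarrow> 'e set" by (simp add: restr_def fun_eq_iff)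
  have A0: "Aop J Ej Am (\<lambda>_ _. 0) = (\<lambda>_ _. 0)" by (simp add: Aop_def bapply_def fun_eq_iff)
  have A2u: "x = x'" if "vec_on E x" "vec_on E x'" "vec_on E y"
      "restrT J Ej (Aop J Ej Am (restr J Ej x)) = y" "restrT J Ej (Aop J Ej Am (restr J Ej x')) = y" for x x' y
    using A2 that unfolding op_invertible_on_def by blast
  have kerM: "\<forall>v\<in>C2. M v = 0 \<longrightarrow> v = 0"
  proof (intro ballI impI)
    fix v assume vC: "v \<in> C2" and Mv: "M v = 0"
    have ImA: "Im (\<Sum>j<J. \<Sum>e\<in>Ej j. cnj (v j e) * Aop J Ej Am v j e) \<le> 0"
      using A1 vC by (simp add: C2_def)
    have Aeq: "Aop J Ej Am v j e = \<i> * BopT J Ej G (T (Bop J Ej G v)) j e" for j e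
    proof -
      have "M v j e = 0" using Mv by simp
      then show ?thesis by (simp add: M_def Mop_def T_def)
    qed
    have "(\<Sum>j<J. \<Sum>e\<in>Ej j. cnj (v j e) * Aop J Ej Am v j e)
        = (\<Sum>j<J. \<i> * (\<Sum>e\<in>Ej j. cnj (v j e) * BopT J Ej G (T (Bop J Ej G v)) j e))"
      by (simp add: Aeq sum_distrib_left mult_ac)
    also have "\<dots> = (\<Sum>j<J. \<i> * complex_of_real (Qf j (\<lambda>e. Re (v j e)) + Qf j (\<lambda>e. Im (v j e))))"
      by (intro sum.cong refl) (simp add: inner)
    also have "\<dots> = \<i> * complex_of_real (\<Sum>j<J. Qf j (\<lambda>e. Re (v j e)) + Qf j (\<lambda>e. Im (v j e)))"
      by (simp add: sum_distrib_left)
    finally have "(\<Sum>j<J. Qf j (\<lambda>e. Re (v j e)) + Qf j (\<lambda>e. Im (v j e))) \<le> 0"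
      using ImA by simp
    then have vG: "v j e = 0" if "j < J" "e \<in> \<Gamma> j" for j e
      using qsum0 that by blast
    have Bv: "Bop J Ej G v = (\<lambda>_ _. 0)"
      using vG by (auto simp: Bop_def bmask_def fun_eq_iff \<Gamma>_def)
    have Av: "Aop J Ej Am v = (\<lambda>_ _. 0)"
      using Aeq by (simp add: Bv T0 fun_eq_iff BopT_def bmask_def)
    define x where "x = (\<lambda>e. restrT J Ej v e / of_nat (card {j. j < J \<and> e \<in> Ej j}))"
    have rx: "restr J Ej x = v" unfolding x_def
      by (rule rangeR) (use vC Sigma_sub vG in \<open>auto simp: C2_def \<Gamma>_def Gj_def\<close>)
    have xE: "vec_on E x" unfolding x_def by (rule uO_vec[OF cover])
    have "x = (\<lambda>_. 0)"
      by (rule A2u[OF xE _ _ _ refl]) (auto simp: vec_on_def rx Av restrT0 restr0 A0)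
    then show "v = 0" using rx restr0 by (simp add: zero_fun_def)
  qed
  have finS: "finite (Sigma {..<J} Ej)" by (rule finite_SigmaI) (auto intro: finEj)
  have invM: "\<forall>y\<in>C2. \<exists>!x. x \<in> C2 \<and> M x = y"
    unfolding C2_def
    by (rule vector_space.inj_surj_gen[OF vs2 finite_imageI[OF finS] span2(2)[OF finS] span2(1)[OF finS]])
       (use kerM in \<open>auto simp: M_def Mop_add Mop_sc Mop_bvec C2_def\<close>)
  have kerK: "\<forall>x\<in>CG. K x = 0 \<longrightarrow> x = 0"
  proof (intro ballI impI)
    fix x assume xC: "x \<in> CG" and Kx: "K x = 0"
    define W where "W = T (restr J \<Gamma> x)"
    have W: "W j e = (\<Sum>e'\<in>\<Gamma> j. complex_of_real (Tm j e e') * x e')" if "j < J" "e \<in> \<Gamma> j" for j e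
      using that by (auto simp: W_def T_def Top_def bapply_def restr_def \<Gamma>_def intro!: sum.cong)
    have "(\<Sum>e\<in>G. cnj (x e) * K x e) = (\<Sum>e\<in>G. \<Sum>j\<in>{j\<in>{..<J}. e \<in> Ej j}. cnj (x e) * W j e)"
      by (intro sum.cong refl) (auto simp: K_def W_def restrT_def \<Gamma>_def Gj_def sum_distrib_left intro!: sum.cong)
    also have "\<dots> = (\<Sum>j\<in>{..<J}. \<Sum>e\<in>{e\<in>G. e \<in> Ej j}. cnj (x e) * W j e)"
      by (rule sum.swap_restrict[OF finG]) simp
    also have "\<dots> = (\<Sum>j<J. \<Sum>e\<in>\<Gamma> j. \<Sum>e'\<in>\<Gamma> j. cnj (x e) * (complex_of_real (Tm j e e') * x e'))"
    proof (rule sum.cong[OF refl])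
      fix j assume j: "j \<in> {..<J}"
      have "{e\<in>G. e \<in> Ej j} = \<Gamma> j" by (auto simp: \<Gamma>_def Gj_def)
      then show "(\<Sum>e\<in>{e\<in>G. e \<in> Ej j}. cnj (x e) * W j e) = (\<Sum>e\<in>\<Gamma> j. \<Sum>e'\<in>\<Gamma> j. cnj (x e) * (complex_of_real (Tm j e e') * x e'))"
        using j by (auto simp: W sum_distrib_left intro!: sum.cong)
    qed
    also have "\<dots> = (\<Sum>j<J. complex_of_real (Qf j (\<lambda>e. Re (x e)) + Qf j (\<lambda>e. Im (x e))))"
      by (intro sum.cong refl) (simp add: qf)
    finally have h: "(\<Sum>j<J. complex_of_real (Qf j (\<lambda>e. Re (x e)) + Qf j (\<lambda>e. Im (x e)))) = 0"
      using Kx by simp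
    have "complex_of_real (\<Sum>j<J. Qf j (\<lambda>e. Re (x e)) + Qf j (\<lambda>e. Im (x e))) = 0"
      using h by (simp only: of_real_sum)
    then have "(\<Sum>j<J. Qf j (\<lambda>e. Re (x e)) + Qf j (\<lambda>e. Im (x e))) = 0" by (simp only: of_real_eq_0_iff)
    then have "(\<Sum>j<J. Qf j (\<lambda>e. Re (x e)) + Qf j (\<lambda>e. Im (x e))) \<le> 0" by (simp only: order_refl)
    then have x0: "x e = 0" if "j < J" "e \<in> \<Gamma> j" for j e
      using qsum0[where z="\<lambda>_. x"] that by blast
    show "x = 0"
    proof
      fix e
      show "x e = 0 e"
      proof (cases "e \<in> G")
        case True
        then obtain j where "j < J" "e \<in> Ej j" using G_sub cover by auto
        then show ?thesis using x0[of j e] True by (simp add: \<Gamma>_def Gj_def)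
      next
        case False then show ?thesis using xC by (simp add: CG_def vec_on_def)
      qed
    qed
  qed
  have restrTG: "vec_on G (restrT J \<Gamma> q)" for q
    using restrT_vec[where J=J and F=\<Gamma> and v=q] by (auto simp: vec_on_def \<Gamma>_def Gj_def)
  have invK: "\<forall>y\<in>CG. \<exists>!x. x \<in> CG \<and> K x = y"
    unfolding CG_def
    by (rule vector_space.inj_surj_gen[OF vs1 finite_imageI[OF finG] span1(2)[OF finG] span1(1)[OF finG]])
       (use kerK restrTG in \<open>auto simp: K_def T_def Top_add Top_sc restr_add restr_sc restrT_add restrT_sc CG_def\<close>)
  have MinvD: "Minv J Ej G Am Tm = op_inv C2 M" by (simp add: Minv_def C2_def M_def)
  have Mp: "op_inv C2 M y \<in> C2 \<and> M (op_inv C2 M y) = y" if "y \<in> C2" for y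
    by (rule op_inv_props[OF invM that])
  have C2add: "a + b \<in> C2" if "a \<in> C2" "b \<in> C2" for a b using that by (auto simp: C2_def bvec_def)
  have Minv_add: "op_inv C2 M (a + b) = op_inv C2 M a + op_inv C2 M b" if "a \<in> C2" "b \<in> C2" for a b
    by (rule op_inv_eq[OF invM C2add[OF that]]) (use Mp that C2add in \<open>auto simp: M_def Mop_add\<close>)
  have Kp: "op_inv CG K y \<in> CG \<and> K (op_inv CG K y) = y" if "y \<in> CG" for y
    by (rule op_inv_props[OF invK that])
  have CGadd: "a + b \<in> CG" if "a \<in> CG" "b \<in> CG" for a b using that by (auto simp: CG_def vec_on_def)
  have CGsc: "sc1 c a \<in> CG" if "a \<in> CG" for a c using that by (auto simp: CG_def vec_on_def sc1_def)
  have Kadd: "K (a + b) = K a + K b" for a b by (simp add: K_def T_def restr_add Top_add restrT_add)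
  have Ksc: "K (sc1 c a) = sc1 c (K a)" for a c by (simp add: K_def T_def restr_sc Top_sc restrT_sc)
  have Kinv_add: "op_inv CG K (a + b) = op_inv CG K a + op_inv CG K b" if "a \<in> CG" "b \<in> CG" for a b
    by (rule op_inv_eq[OF invK CGadd[OF that]]) (use Kp that CGadd Kadd in auto)
  have Kinv_sc: "op_inv CG K (sc1 c a) = sc1 c (op_inv CG K a)" if "a \<in> CG" for a c
    by (rule op_inv_eq[OF invK CGsc[OF that]]) (use Kp that CGsc Ksc in auto)
  define L1 where "L1 = (\<lambda>q. restrT J \<Gamma> (T q))"
  have L1C: "L1 q \<in> CG" for q
    using restrT_vec[where J=J and F=\<Gamma> and v="T q"] by (auto simp: L1_def CG_def vec_on_def \<Gamma>_def Gj_def)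
  have L1add: "L1 (a + b) = L1 a + L1 b" for a b by (simp add: L1_def T_def Top_add restrT_add)
  have L1sc: "L1 (sc2 c a) = sc1 c (L1 a)" for a c by (simp add: L1_def T_def Top_sc restrT_sc)
  define P where "P = (\<lambda>q. restr J \<Gamma> (op_inv CG K (L1 q)))"
  have PD: "Pop J Ej G Tm = P" by (simp add: Pop_def P_def CG_def K_def L1_def T_def \<Gamma>_def fun_eq_iff)
  have Padd: "P (a + b) = P a + P b" for a b
    by (simp add: P_def L1add Kinv_add L1C restr_add)
  have Psc: "P (sc2 c a) = sc2 c (P a)" for a c
    by (simp add: P_def L1sc Kinv_sc L1C restr_sc)
  define fp where "fp = BopT J Ej G (T p)"
  have fpC: "fp \<in> C2" by (auto simp: fp_def C2_def BopT_def bmask_def bvec_def Gj_def)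
  have fC: "f \<in> C2" using f_in by (simp add: C2_def)
  define u where "u = op_inv C2 M (fp + f)"
  have uD: "Minv J Ej G Am Tm (\<lambda>j e. BopT J Ej G (Top J Ej G Tm p) j e + f j e) = u"
    by (simp add: MinvD u_def fp_def T_def plus_fun_def)
  have usplit: "u = op_inv C2 M fp + op_inv C2 M f" unfolding u_def by (rule Minv_add[OF fpC fC])
  define X where "X = Bop J Ej G (op_inv C2 M fp)"
  define Y where "Y = Bop J Ej G (op_inv C2 M f)"
  define Z where "Z = Bop J Ej G u"
  have ZXY: "Z = X + Y" by (simp add: Z_def X_def Y_def usplit Bop_def bmask_add)
  have SD: "Sop J Ej G Am Tm p = p + sc2 (2 * \<i>) X"
    by (simp add: Sop_def X_def fp_def MinvD T_def fun_eq_iff sc2_def)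
  have psol': "p j e + (2 * P (p + sc2 (2 * \<i>) X) j e - (p j e + 2 * \<i> * X j e))
      = - 2 * \<i> * (2 * P Y j e - Y j e)" for j e
  proof -
    have "p j e + PiOp J Ej G Tm (Sop J Ej G Am Tm p) j e = - 2 * \<i> * PiOp J Ej G Tm (Bop J Ej G (Minv J Ej G Am Tm f)) j e"
      using p_sol by (simp add: fun_eq_iff)
    then show ?thesis by (simp add: PiOp_def PD SD Y_def MinvD sc2_def)
  qed
  have key: "P (p + sc2 (2 * \<i>) Z) = sc2 \<i> Z"
  proof -
    have "p + sc2 (2 * \<i>) Z = (p + sc2 (2 * \<i>) X) + sc2 (2 * \<i>) Y"
      by (simp add: ZXY fun_eq_iff sc2_def algebra_simps)
    then have "P (p + sc2 (2 * \<i>) Z) = P (p + sc2 (2 * \<i>) X) + sc2 (2 * \<i>) (P Y)"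
      by (simp add: Padd Psc)
    also have "\<dots> = sc2 \<i> Z"
    proof (intro ext)
      fix j e
      have h: "p j e + (2 * P (p + sc2 (2 * \<i>) X) j e - (p j e + 2 * \<i> * X j e))
      = - 2 * \<i> * (2 * P Y j e - Y j e)" by (rule psol')
      have "P (p + sc2 (2 * \<i>) X) j e = \<i> * X j e + \<i> * Y j e - 2 * \<i> * P Y j e"
        by (rule lin_aux[OF h])
      then show "(P (p + sc2 (2 * \<i>) X) + sc2 (2 * \<i>) (P Y)) j e = sc2 \<i> Z j e"
        by (simp add: sc2_def ZXY algebra_simps)
    qed
    finally show ?thesis .
  qed
  define w where "w = op_inv CG K (L1 (p + sc2 (2 * \<i>) Z))"
  have wC: "w \<in> CG" and Kw: "K w = L1 (p + sc2 (2 * \<i>) Z)"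
    using Kp[OF L1C] unfolding w_def by blast+
  have rw: "restr J \<Gamma> w = sc2 \<i> Z" using key by (simp add: P_def w_def)
  have uG: "u j e = - \<i> * w e" if "j < J" "e \<in> G" "e \<in> Ej j" for j e
  proof -
    have "restr J \<Gamma> w j e = sc2 \<i> Z j e" using rw by simp
    then have "w e = \<i> * u j e" using that by (simp add: restr_def sc2_def Z_def Bop_def bmask_def \<Gamma>_def Gj_def)
    then show ?thesis by simp
  qed
  have uC: "u \<in> C2" using Mp[OF C2add[OF fpC fC]] u_def by simp
  have Mu: "M u = fp + f" using Mp[OF C2add[OF fpC fC]] u_def by simp
  define uO where "uO = (\<lambda>e. restrT J Ej u e / of_nat (card {j. j < J \<and> e \<in> Ej j}))"
  have ruO: "restr J Ej uO = u" unfolding uO_def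
    by (rule rangeR) (use uC Sigma_sub uG in \<open>auto simp: C2_def\<close>)
  have uOE: "vec_on E uO" unfolding uO_def by (rule uO_vec[OF cover])
  have BTr: "restrT J Ej (BopT J Ej G q) = restrT J \<Gamma> q" for q
  proof (rule ext)
    fix e
    show "restrT J Ej (BopT J Ej G q) e = restrT J \<Gamma> q e"
    proof (cases "e \<in> G")
      case True
      then show ?thesis by (simp add: restrT_def BopT_def bmask_def \<Gamma>_def Gj_def)
    next
      case False
      then show ?thesis by (simp add: restrT_def BopT_def bmask_def \<Gamma>_def Gj_def)
    qed
  qed
  have Aeq: "Aop J Ej Am u = fp + f + sc2 \<i> (BopT J Ej G (T Z))"
  proof (intro ext)
    fix j e
    have "M u j e = (fp + f) j e" using Mu by simp
    then have h: "Aop J Ej Am u j e - \<i> * BopT J Ej G (T Z) j e = fp j e + f j e"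
      by (simp add: M_def Mop_def Z_def T_def)
    then show "Aop J Ej Am u j e = (fp + f + sc2 \<i> (BopT J Ej G (T Z))) j e"
      by (simp add: sc2_def diff_eq_eq)
  qed
  have L1z: "L1 p e + \<i> * L1 Z e = 0" for e
  proof -
    have "K w = L1 (restr J \<Gamma> w)" by (simp add: K_def L1_def)
    also have "\<dots> = sc1 \<i> (L1 Z)" by (simp add: rw L1sc)
    finally have "L1 p + sc1 (2 * \<i>) (L1 Z) = sc1 \<i> (L1 Z)" using Kw by (simp add: L1add L1sc)
    then have h: "L1 p e + 2 * \<i> * L1 Z e = \<i> * L1 Z e" by (simp add: fun_eq_iff sc1_def)
    have "L1 p e + \<i> * L1 Z e = (L1 p e + 2 * \<i> * L1 Z e) - \<i> * L1 Z e" by (simp add: algebra_simps)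
    also have "\<dots> = 0" using h by simp
    finally show ?thesis .
  qed
  have final: "restrT J Ej (Aop J Ej Am (restr J Ej uO)) = restrT J Ej f"
  proof (rule ext)
    fix e
    have "restrT J Ej (Aop J Ej Am (restr J Ej uO)) e = L1 p e + restrT J Ej f e + \<i> * L1 Z e"
      by (simp add: ruO Aeq restrT_add restrT_sc BTr fp_def L1_def sc1_def)
    then show "restrT J Ej (Aop J Ej Am (restr J Ej uO)) e = restrT J Ej f e"
      using L1z[of e] by (simp add: algebra_simps)
  qed
  have fE: "vec_on E (restrT J Ej f)"
    using restrT_vec[where J=J and F=Ej and v=f] cover by simp
  have uniq: "\<forall>w. vec_on E w \<and> restrT J Ej (Aop J Ej Am (restr J Ej w)) = restrT J Ej f \<longrightarrow> w = uO"
    using A2u[OF _ uOE fE _ final] by blast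
  show ?thesis
    unfolding Let_def uD uO_def[symmetric] using ruO uOE final uniq by blast
qed


end
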